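(* Let $T>0$ and let $\alpha:[0,T]\to(0,1)$ be a continuously differentiable, decreasing function, written $t\mapsto\alpha_t$. Consider the variance preserving SDE (VPSDE) on $\mathbb{R}^D$ with coefficients ${F}_t=\frac12\frac{d\log\alpha_t}{dt}I$, ${G}_t=\sqrt{-\frac{d\log\alpha_t}{dt}}\,I$, and set $L_t=\sqrt{1-\alpha_t}\,I$ (so $L_tL_t^T=\Sigma_t=(1-\alpha_t)I$). Let $\Psi(t,s)$ be the transition matrix associated with $F$, i.e. $\frac{\partial}{\partial t}\Psi(t,s)=F_t\Psi(t,s)$, $\Psi(s,s)=I$. Let $\epsilon_\theta:\mathbb{R}^D\times[0,T]\to\mathbb{R}^D$ be any function. Then for $0\le t-\Delta t< t\le T$ the exponential-integrator update $$\hat{x}_{t-\Delta t}=\Psi(t-\Delta t,t)\hat{x}_t+\Big[\int_t^{t-\Delta t}\tfrac12\Psi(t-\Delta t,\tau)G_\tau G_\tau^TL_\tau^{-T}\,d\tau\Big]\epsilon_\theta(\hat{x}_t,t)$$ equals $$\hat{x}_{t-\Delta t}=\sqrt{\frac{\alpha_{t-\Delta t}}{\alpha_t}}\,\hat{x}_t+\Big[\sqrt{1-\alpha_{t-\Delta t}}-\sqrt{\frac{\alpha_{t-\Delta t}}{\alpha_t}}\sqrt{1-\alpha_t}\Big]\epsilon_\theta(\hat{x}_t,t),$$ which is exactly the deterministic DDIM sampling update.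
   Context: This update is the exponential-integrator discretization of the probability flow ODE $\frac{d\hat x}{dt}=F_t\hat x+\frac12 G_tG_t^TL_t^{-T}\epsilon_\theta(\hat x,t)$, where $\epsilon_\theta$ is a (noise-prediction) network, obtained by freezing $\epsilon_\theta$ at its value at time $t$ over $[t-\Delta t,t]$. The deterministic DDIM update (Song, Meng, Ermon) is the displayed second formula. *)

theory Defs
  imports "HOL-Analysis.Analysis"
begin

text \<open>VPSDE coefficients, given alpha and its derivative alpha'
  (so that d log alpha / dt = alpha' t / alpha t).\<close>

definition vp_F :: "(real \<Rightarrow> real) \<Rightarrow> (real \<Rightarrow> real) \<Rightarrow> real \<Rightarrow> real^'n^'n" where
  "vp_F \<alpha> \<alpha>' t = ((1/2) * (\<alpha>' t / \<alpha> t)) *\<^sub>R mat 1"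

definition vp_G :: "(real \<Rightarrow> real) \<Rightarrow> (real \<Rightarrow> real) \<Rightarrow> real \<Rightarrow> real^'n^'n" where
  "vp_G \<alpha> \<alpha>' t = sqrt (- (\<alpha>' t / \<alpha> t)) *\<^sub>R mat 1"

definition vp_L :: "(real \<Rightarrow> real) \<Rightarrow> real \<Rightarrow> real^'n^'n" where
  "vp_L \<alpha> t = sqrt (1 - \<alpha> t) *\<^sub>R mat 1"

end

theory Submission
  imports Defs
begin
lemma mmul_scaleR_left: "((a::real) *\<^sub>R (A::real^'m^'n)) ** (B::real^'k^'m) = a *\<^sub>R (A ** B)"
  by (simp add: matrix_matrix_mult_def vec_eq_iff sum_distrib_left mult_ac)

lemma alpha'_nonpos:
  fixes \<alpha> \<alpha>' :: "real \<Rightarrow> real"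
  assumes T: "T > 0"
    and d: "(\<alpha> has_real_derivative \<alpha>' s) (at s within {0..T})"
    and decr: "\<And>s u. s \<in> {0..T} \<Longrightarrow> u \<in> {0..T} \<Longrightarrow> s \<le> u \<Longrightarrow> \<alpha> u \<le> \<alpha> s"
    and s: "s \<in> {0..T}"
  shows "\<alpha>' s \<le> 0"
proof (rule tendsto_upperbound)
  show "((\<lambda>y. (\<alpha> y - \<alpha> s) / (y - s)) \<longlongrightarrow> \<alpha>' s) (at s within {0..T})"
    using d by (simp add: has_field_derivative_iff)
  show "\<forall>\<^sub>F y in at s within {0..T}. (\<alpha> y - \<alpha> s) / (y - s) \<le> 0"
    unfolding eventually_at_filter
  proof (intro always_eventually allI impI)
    fix y assume y: "y \<noteq> s" "y \<in> {0..T}"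
    show "(\<alpha> y - \<alpha> s) / (y - s) \<le> 0"
    proof (cases "y < s")
      case True
      then have "\<alpha> s \<le> \<alpha> y" using decr[of y s] y s by auto
      then show ?thesis using True by (intro divide_nonneg_neg) auto
    next
      case False
      then have "\<alpha> y \<le> \<alpha> s" "s < y" using decr[of s y] y s by auto
      then show ?thesis by (intro divide_nonpos_pos) auto
    qed
  qed
  show "at s within {0..T} \<noteq> bot"
    using s T by (simp add: trivial_limit_within islimpt_Icc)
qed

lemma Psi_formula:
  fixes \<alpha> \<alpha>' :: "real \<Rightarrow> real" and \<Psi> :: "real \<Rightarrow> real \<Rightarrow> real^'n^'n"
  assumes alpha_range: "\<And>s. s \<in> {0..T} \<Longrightarrow> 0 < \<alpha> s \<and> \<alpha> s < 1"
    and alpha_deriv: "\<And>s. s \<in> {0..T} \<Longrightarrow> (\<alpha> has_real_derivative \<alpha>' s) (at s within {0..T})"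
    and Psi_diag: "\<And>s. s \<in> {0..T} \<Longrightarrow> \<Psi> s s = mat 1"
    and Psi_ode: "\<And>s u. s \<in> {0..T} \<Longrightarrow> u \<in> {0..T} \<Longrightarrow>
        ((\<lambda>r. \<Psi> r s) has_vector_derivative (vp_F \<alpha> \<alpha>' u ** \<Psi> u s)) (at u within {0..T})"
    and s: "s \<in> {0..T}" and r: "r \<in> {0..T}"
  shows "\<Psi> r s = sqrt (\<alpha> r / \<alpha> s) *\<^sub>R mat 1"
proof -
  define M where "M r = (1 / sqrt (\<alpha> r)) *\<^sub>R \<Psi> r s" for r
  have "(M has_vector_derivative 0) (at u within {0..T})" if u: "u \<in> {0..T}" for u
  proof -
    have au: "0 < \<alpha> u" using alpha_range[OF u] by auto
    have d1: "((\<lambda>r. 1 / sqrt (\<alpha> r)) has_real_derivative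
        (- (\<alpha>' u / (2 * sqrt (\<alpha> u))) / (sqrt (\<alpha> u))\<^sup>2)) (at u within {0..T})"
      using au alpha_deriv[OF u]
      by (auto intro!: derivative_eq_intros simp: power2_eq_square divide_simps)
    have "(M has_vector_derivative ((1 / sqrt (\<alpha> u)) *\<^sub>R (vp_F \<alpha> \<alpha>' u ** \<Psi> u s)
        + (- (\<alpha>' u / (2 * sqrt (\<alpha> u))) / (sqrt (\<alpha> u))\<^sup>2) *\<^sub>R \<Psi> u s)) (at u within {0..T})"
      unfolding M_def by (rule has_vector_derivative_scaleR[OF d1 Psi_ode[OF s u]])
    moreover have "(1 / sqrt (\<alpha> u)) *\<^sub>R (vp_F \<alpha> \<alpha>' u ** \<Psi> u s)
        + (- (\<alpha>' u / (2 * sqrt (\<alpha> u))) / (sqrt (\<alpha> u))\<^sup>2) *\<^sub>R \<Psi> u s = 0"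
    proof -
      have "(1 / sqrt (\<alpha> u)) * ((1/2) * (\<alpha>' u / \<alpha> u)) + (- (\<alpha>' u / (2 * sqrt (\<alpha> u))) / (sqrt (\<alpha> u))\<^sup>2) = 0"
        using au by (simp add: field_simps)
      then show ?thesis
        by (simp add: vp_F_def mmul_scaleR_left scaleR_add_left[symmetric])
    qed
    ultimately show ?thesis by simp
  qed
  then obtain c where c: "\<And>x. x \<in> {0..T} \<Longrightarrow> M x = c"
    using has_vector_derivative_zero_constant[of "{0..T}" M] by auto
  have "c = (1 / sqrt (\<alpha> s)) *\<^sub>R mat 1" using c[OF s] Psi_diag[OF s] by (simp add: M_def)
  then have "(1 / sqrt (\<alpha> r)) *\<^sub>R \<Psi> r s = (1 / sqrt (\<alpha> s)) *\<^sub>R mat 1" using c[OF r] by (simp add: M_def)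
  then have "sqrt (\<alpha> r) *\<^sub>R ((1 / sqrt (\<alpha> r)) *\<^sub>R \<Psi> r s) = sqrt (\<alpha> r) *\<^sub>R ((1 / sqrt (\<alpha> s)) *\<^sub>R mat 1)"
    by simp
  then show ?thesis using alpha_range[OF r] by (simp add: real_sqrt_divide)
qed
lemma mmul_scaleR_right: "(A::real^'m^'n) ** ((a::real) *\<^sub>R (B::real^'k^'m)) = a *\<^sub>R (A ** B)"
  by (simp add: matrix_matrix_mult_def vec_eq_iff sum_distrib_left mult_ac)
lemma transpose_scaleR_mat: "transpose ((a::real) *\<^sub>R (mat 1::real^'n^'n)) = a *\<^sub>R mat 1"
  by (simp add: transpose_def vec_eq_iff mat_def)
lemma mvmul_scaleR: "((a::real) *\<^sub>R (A::real^'m^'n)) *v x = a *\<^sub>R (A *v x)"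
  by (simp add: matrix_vector_mult_def vec_eq_iff sum_distrib_left mult_ac)

lemma matrix_inv_scalar:
  fixes c :: real
  assumes "c \<noteq> 0"
  shows "matrix_inv (c *\<^sub>R (mat 1 :: real^'n^'n)) = (1/c) *\<^sub>R mat 1"
proof -
  let ?A = "c *\<^sub>R (mat 1 :: real^'n^'n)"
  let ?B = "(1/c) *\<^sub>R (mat 1 :: real^'n^'n)"
  have AB: "?A ** ?B = mat 1" "?B ** ?A = mat 1"
    using assms by (simp_all add: mmul_scaleR_left mmul_scaleR_right)
  have uniq: "C = ?B" if "?A ** C = mat 1 \<and> C ** ?A = mat 1" for C :: "real^'n^'n"
  proof -
    have "C = C ** (?A ** ?B)" using AB by simp
    also have "\<dots> = (C ** ?A) ** ?B" by (simp add: matrix_mul_assoc)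
    also have "\<dots> = ?B" using that by simp
    finally show ?thesis .
  qed
  have "?A ** matrix_inv ?A = mat 1 \<and> matrix_inv ?A ** ?A = mat 1"
    unfolding matrix_inv_def by (rule someI[of _ ?B]) (use AB in simp)
  then show ?thesis using uniq by blast
qed

lemma scalar_id: "- ((a::real) / c) * s / (2 * r) = - (s * a / (2 * c * r))"
  unfolding divide_inverse by (simp add: inverse_mult_distrib algebra_simps)

theorem proposition2:
  fixes T :: real
    and \<alpha> \<alpha>' :: "real \<Rightarrow> real"
    and \<Psi> :: "real \<Rightarrow> real \<Rightarrow> real^'n^'n"
    and \<epsilon> :: "real^'n \<Rightarrow> real \<Rightarrow> real^'n"
    and x :: "real^'n"
    and t \<Delta>t :: real
  assumes T_pos: "T > 0"
    and alpha_range: "\<And>s. s \<in> {0..T} \<Longrightarrow> 0 < \<alpha> s \<and> \<alpha> s < 1"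
    and alpha_deriv: "\<And>s. s \<in> {0..T} \<Longrightarrow> (\<alpha> has_real_derivative \<alpha>' s) (at s within {0..T})"
    and alpha'_cont: "continuous_on {0..T} \<alpha>'"
    and alpha_decr: "\<And>s u. s \<in> {0..T} \<Longrightarrow> u \<in> {0..T} \<Longrightarrow> s \<le> u \<Longrightarrow> \<alpha> u \<le> \<alpha> s"
    and Psi_diag: "\<And>s. s \<in> {0..T} \<Longrightarrow> \<Psi> s s = mat 1"
    and Psi_ode: "\<And>s u. s \<in> {0..T} \<Longrightarrow> u \<in> {0..T} \<Longrightarrow>
        ((\<lambda>r. \<Psi> r s) has_vector_derivative (vp_F \<alpha> \<alpha>' u ** \<Psi> u s)) (at u within {0..T})"
    and step: "0 \<le> t - \<Delta>t" "t - \<Delta>t < t" "t \<le> T"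
  shows "\<Psi> (t - \<Delta>t) t *v x
          + (- integral {t - \<Delta>t..t}
                 (\<lambda>\<tau>. (1/2) *\<^sub>R (\<Psi> (t - \<Delta>t) \<tau> ** vp_G \<alpha> \<alpha>' \<tau> ** transpose (vp_G \<alpha> \<alpha>' \<tau>)
                          ** matrix_inv (transpose (vp_L \<alpha> \<tau>))))) *v \<epsilon> x t
       = sqrt (\<alpha> (t - \<Delta>t) / \<alpha> t) *\<^sub>R x
          + (sqrt (1 - \<alpha> (t - \<Delta>t)) - sqrt (\<alpha> (t - \<Delta>t) / \<alpha> t) * sqrt (1 - \<alpha> t)) *\<^sub>R \<epsilon> x t"
proof -
  define b where "b = t - \<Delta>t"
  have sub: "{b..t} \<subseteq> {0..T}" using step b_def by auto
  have bT: "b \<in> {0..T}" and tT: "t \<in> {0..T}" using step b_def by auto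
  define f where "f \<tau> = (1/2) * sqrt (\<alpha> b / \<alpha> \<tau>) * (- (\<alpha>' \<tau> / \<alpha> \<tau>)) * (1 / sqrt (1 - \<alpha> \<tau>))" for \<tau>
  define h where "h \<tau> = sqrt (\<alpha> b) * (sqrt (1 - \<alpha> \<tau>) / sqrt (\<alpha> \<tau>))" for \<tau>
  have integrand: "(1/2) *\<^sub>R (\<Psi> b \<tau> ** vp_G \<alpha> \<alpha>' \<tau> ** transpose (vp_G \<alpha> \<alpha>' \<tau>)
                          ** matrix_inv (transpose (vp_L \<alpha> \<tau>))) = f \<tau> *\<^sub>R mat 1"
    if \<tau>: "\<tau> \<in> {b..t}" for \<tau>
  proof -
    have \<tau>T: "\<tau> \<in> {0..T}" using \<tau> sub by auto
    have a: "0 < \<alpha> \<tau>" "\<alpha> \<tau> < 1" using alpha_range[OF \<tau>T] by auto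
    have np: "\<alpha>' \<tau> \<le> 0" by (rule alpha'_nonpos[of T \<alpha> \<alpha>' \<tau>, OF T_pos alpha_deriv[OF \<tau>T] alpha_decr \<tau>T])
    have sq: "sqrt (- (\<alpha>' \<tau> / \<alpha> \<tau>)) * sqrt (- (\<alpha>' \<tau> / \<alpha> \<tau>)) = - (\<alpha>' \<tau> / \<alpha> \<tau>)"
      using a np by (simp add: divide_nonpos_pos)
    have ne: "sqrt (1 - \<alpha> \<tau>) \<noteq> 0" using a by simp
    have P: "\<Psi> b \<tau> = sqrt (\<alpha> b / \<alpha> \<tau>) *\<^sub>R mat 1"
      by (rule Psi_formula[OF alpha_range alpha_deriv Psi_diag Psi_ode \<tau>T bT])
    show ?thesis
      unfolding P vp_G_def vp_L_def
        transpose_scaleR_mat matrix_inv_scalar[OF ne]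
      apply (simp add: mmul_scaleR_left mmul_scaleR_right f_def)
      apply (simp only: mult.assoc[symmetric] sq)
      apply (simp only: scaleR_minus_left[symmetric])
      apply (rule arg_cong[where f="\<lambda>c. c *\<^sub>R mat 1"])
      apply (rule scalar_id)
      done
  qed
  have hder: "(h has_vector_derivative f \<tau>) (at \<tau> within {b..t})" if \<tau>: "\<tau> \<in> {b..t}" for \<tau>
  proof -
    have \<tau>T: "\<tau> \<in> {0..T}" using \<tau> sub by auto
    have a: "0 < \<alpha> \<tau>" "\<alpha> \<tau> < 1" using alpha_range[OF \<tau>T] by auto
    have d: "(\<alpha> has_real_derivative \<alpha>' \<tau>) (at \<tau> within {b..t})"
      using alpha_deriv[OF \<tau>T] sub by (rule DERIV_subset)
    have d1: "((\<lambda>\<tau>. sqrt (1 - \<alpha> \<tau>)) has_real_derivative (- \<alpha>' \<tau>) / (2 * sqrt (1 - \<alpha> \<tau>))) (at \<tau> within {b..t})"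
      using a d by (auto intro!: derivative_eq_intros simp: divide_simps)
    have d2: "((\<lambda>\<tau>. sqrt (\<alpha> \<tau>)) has_real_derivative \<alpha>' \<tau> / (2 * sqrt (\<alpha> \<tau>))) (at \<tau> within {b..t})"
      using a d by (auto intro!: derivative_eq_intros simp: divide_simps)
    have sa: "sqrt (\<alpha> \<tau>) \<noteq> 0" using a by simp
    have d3: "(h has_real_derivative sqrt (\<alpha> b) * (((- \<alpha>' \<tau>) / (2 * sqrt (1 - \<alpha> \<tau>)) * sqrt (\<alpha> \<tau>)
         - sqrt (1 - \<alpha> \<tau>) * (\<alpha>' \<tau> / (2 * sqrt (\<alpha> \<tau>)))) / (sqrt (\<alpha> \<tau>) * sqrt (\<alpha> \<tau>))))
         (at \<tau> within {b..t})"
      unfolding h_def by (intro DERIV_cmult DERIV_divide d1 d2 sa)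
    have e1: "sqrt (\<alpha> \<tau>) * sqrt (\<alpha> \<tau>) = \<alpha> \<tau>" "sqrt (1 - \<alpha> \<tau>) * sqrt (1 - \<alpha> \<tau>) = 1 - \<alpha> \<tau>"
      using a by auto
    have s1: "sqrt (1 - \<alpha> \<tau>) \<noteq> 0" using a by simp
    have eq: "sqrt (\<alpha> b) * (((- \<alpha>' \<tau>) / (2 * sqrt (1 - \<alpha> \<tau>)) * sqrt (\<alpha> \<tau>)
         - sqrt (1 - \<alpha> \<tau>) * (\<alpha>' \<tau> / (2 * sqrt (\<alpha> \<tau>)))) / (sqrt (\<alpha> \<tau>) * sqrt (\<alpha> \<tau>))) = f \<tau>"
    proof -
      have "sqrt (\<alpha> b) * (((- \<alpha>' \<tau>) / (2 * sqrt (1 - \<alpha> \<tau>)) * sqrt (\<alpha> \<tau>)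
         - sqrt (1 - \<alpha> \<tau>) * (\<alpha>' \<tau> / (2 * sqrt (\<alpha> \<tau>)))) / (sqrt (\<alpha> \<tau>) * sqrt (\<alpha> \<tau>)))
         = sqrt (\<alpha> b) * (- \<alpha>' \<tau>) * (sqrt (\<alpha> \<tau>) * sqrt (\<alpha> \<tau>) + sqrt (1 - \<alpha> \<tau>) * sqrt (1 - \<alpha> \<tau>))
           / (2 * sqrt (1 - \<alpha> \<tau>) * sqrt (\<alpha> \<tau>) * (sqrt (\<alpha> \<tau>) * sqrt (\<alpha> \<tau>)))"
        using sa s1 by (simp add: field_simps)
      also have "\<dots> = sqrt (\<alpha> b) * (- \<alpha>' \<tau>) / (2 * sqrt (1 - \<alpha> \<tau>) * sqrt (\<alpha> \<tau>) * \<alpha> \<tau>)"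
        unfolding e1 by simp
      also have "\<dots> = f \<tau>"
        unfolding f_def real_sqrt_divide using sa s1 a by (simp add: field_simps)
      finally show ?thesis .
    qed
    have "(h has_real_derivative f \<tau>) (at \<tau> within {b..t})"
      using d3 unfolding eq .
    then show ?thesis by (simp add: has_real_derivative_iff_has_vector_derivative)
  qed
  have FI: "(f has_integral (h t - h b)) {b..t}"
    using step b_def by (intro fundamental_theorem_of_calculus hder) auto
  have MI: "((\<lambda>\<tau>. f \<tau> *\<^sub>R (mat 1::real^'n^'n)) has_integral (h t - h b) *\<^sub>R mat 1) {b..t}"
    by (rule has_integral_scaleR_left[OF FI])
  have I: "integral {b..t} (\<lambda>\<tau>. (1/2) *\<^sub>R (\<Psi> b \<tau> ** vp_G \<alpha> \<alpha>' \<tau> ** transpose (vp_G \<alpha> \<alpha>' \<tau>)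
                          ** matrix_inv (transpose (vp_L \<alpha> \<tau>)))) = (h t - h b) *\<^sub>R mat 1"
  proof -
    have "integral {b..t} (\<lambda>\<tau>. (1/2) *\<^sub>R (\<Psi> b \<tau> ** vp_G \<alpha> \<alpha>' \<tau> ** transpose (vp_G \<alpha> \<alpha>' \<tau>)
                          ** matrix_inv (transpose (vp_L \<alpha> \<tau>)))) = integral {b..t} (\<lambda>\<tau>. f \<tau> *\<^sub>R (mat 1::real^'n^'n))"
      by (rule integral_cong) (rule integrand)
    also have "\<dots> = (h t - h b) *\<^sub>R mat 1" by (rule integral_unique[OF MI])
    finally show ?thesis .
  qed
  have ab: "0 < \<alpha> b" "\<alpha> b < 1" "0 < \<alpha> t" using alpha_range[OF bT] alpha_range[OF tT] by auto
  have P: "\<Psi> b t = sqrt (\<alpha> b / \<alpha> t) *\<^sub>R mat 1"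
    by (rule Psi_formula[OF alpha_range alpha_deriv Psi_diag Psi_ode tT bT])
  have hh: "- (h t - h b) = sqrt (1 - \<alpha> b) - sqrt (\<alpha> b / \<alpha> t) * sqrt (1 - \<alpha> t)"
    using ab by (simp add: h_def real_sqrt_divide)
  have L: "\<Psi> b t *v x = sqrt (\<alpha> b / \<alpha> t) *\<^sub>R x"
    by (simp add: P mvmul_scaleR)
  have R: "(- ((h t - h b) *\<^sub>R mat 1)) *v \<epsilon> x t = (- (h t - h b)) *\<^sub>R \<epsilon> x t"
  proof -
    have "- ((h t - h b) *\<^sub>R (mat 1::real^'n^'n)) = (- (h t - h b)) *\<^sub>R mat 1" by (rule scaleR_minus_left[symmetric])
    then show ?thesis by (simp only: mvmul_scaleR matrix_vector_mul_lid)
  qed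
  show ?thesis
    unfolding b_def[symmetric] I L R hh ..
qed
end
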